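(* Let $\mathcal{L}=(n,\mathcal{M},\mathcal{C})$ be a linearization and let $\mathcal{T}\subseteq\mathcal{P}$ be a subset of the proper monomials. A binary vector $y\in\{0,1\}^{\mathcal{S}\cup\mathcal{T}}$ can be extended to a vector $y'\in P(\mathcal{L})\cap\mathbb{Z}^{\mathcal{M}}$ if and only if $y_m=\prod_{i\in m}y_{\{i\}}$ holds for each $m\in\mathcal{T}$.
   Context: $[n]=\{1,\dots,n\}$; a monomial is a nonempty subset of $[n]$; $\mathcal{S}=\{\{i\}:i\in[n]\}$. A linearization is a triple $\mathcal{L}=(n,\mathcal{M},\mathcal{C})$, where $\mathcal{M}$ is a set of monomials with $\mathcal{S}\subseteq\mathcal{M}$ and $\mathcal{C}$ is a set of AND-constraints; each AND-constraint is a set $c\subseteq\mathcal{M}$ whose union $\bigcup c$ lies in $\mathcal{M}$. $\mathcal{P}=\mathcal{M}\setminus\mathcal{S}$. Linearizations are assumed consistent: for each $m\in\mathcal{P}$ there is $c\in\mathcal{C}$ with $\bigcup c=m$ and $|m'|<|m|$ for all $m'\in c$. $P(\mathcal{L})\subseteq\mathbb{R}^{\mathcal{M}}$ is the set of $y$ with $0\le y_m\le1$ for all $m\in\mathcal{M}$, $y_{\bigcup c}\le y_m$ for all $c\in\mathcal{C}$, $m\in c$, and $\sum_{m\in c}y_m\le y_{\bigcup c}+|c|-1$ for all $c\in\mathcal{C}$. *)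

theory Defs
  imports "HOL-Analysis.Analysis"
begin

text \<open>Monomials are nonempty subsets of [n] = {1..n}, represented as nat sets.
  A linearization is a triple (n, M, C) with M a set of monomials containing all
  singletons and C a set of AND-constraints.\<close>

definition singletons :: "nat \<Rightarrow> nat set set" where
  "singletons n = {{i} | i. i \<in> {1..n}}"

definition is_monomial :: "nat \<Rightarrow> nat set \<Rightarrow> bool" where
  "is_monomial n m \<longleftrightarrow> m \<noteq> {} \<and> m \<subseteq> {1..n}"

definition proper_monomials :: "nat \<Rightarrow> nat set set \<Rightarrow> nat set set" where
  "proper_monomials n M = M - singletons n"

text \<open>Linearization, including the standing consistency assumption.\<close>
definition linearization :: "nat \<Rightarrow> nat set set \<Rightarrow> nat set set set \<Rightarrow> bool" where
  "linearization n M C \<longleftrightarrow>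
     (\<forall>m\<in>M. is_monomial n m) \<and> singletons n \<subseteq> M \<and>
     (\<forall>c\<in>C. c \<subseteq> M \<and> \<Union>c \<in> M) \<and>
     (\<forall>m\<in>proper_monomials n M. \<exists>c\<in>C. \<Union>c = m \<and> (\<forall>m'\<in>c. card m' < card m))"

definition in_P :: "nat set set \<Rightarrow> nat set set set \<Rightarrow> (nat set \<Rightarrow> real) \<Rightarrow> bool" where
  "in_P M C y \<longleftrightarrow>
     (\<forall>m\<in>M. 0 \<le> y m \<and> y m \<le> 1) \<and>
     (\<forall>c\<in>C. \<forall>m\<in>c. y (\<Union>c) \<le> y m) \<and>
     (\<forall>c\<in>C. (\<Sum>m\<in>c. y m) \<le> y (\<Union>c) + real (card c) - 1)"

end

theory Submission
  imports Defs
begin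

lemma prod01:
  fixes f :: "nat \<Rightarrow> real"
  assumes "finite m" "\<forall>i\<in>m. f i \<in> {0,1}"
  shows "prod f m = (if \<forall>i\<in>m. f i = 1 then 1 else 0)"
  using assms by (induction m rule: finite_induct) auto

lemma int01:
  fixes x :: real
  assumes "x \<in> \<int>" "0 \<le> x" "x \<le> 1"
  shows "x = 0 \<or> x = 1"
proof -
  obtain k where "x = of_int k" using assms(1) Ints_cases by blast
  with assms have "0 \<le> k" "k \<le> 1" by auto
  then have "k = 0 \<or> k = 1" by auto
  with \<open>x = of_int k\<close> show ?thesis by auto
qed

lemma sing_in: "m \<subseteq> {1..n} \<Longrightarrow> i \<in> m \<Longrightarrow> {i} \<in> singletons n"
  unfolding singletons_def by auto

theorem proposition2p1:
  fixes n :: nat and M :: "nat set set" and C :: "nat set set set"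
    and T :: "nat set set" and y :: "nat set \<Rightarrow> real"
  assumes "linearization n M C"
    and "T \<subseteq> proper_monomials n M"
    and "\<forall>m \<in> singletons n \<union> T. y m \<in> {0, 1}"
  shows "(\<exists>y'. in_P M C y' \<and> (\<forall>m\<in>M. y' m \<in> \<int>) \<and>
              (\<forall>m \<in> singletons n \<union> T. y' m = y m))
         \<longleftrightarrow> (\<forall>m\<in>T. y m = (\<Prod>i\<in>m. y {i}))"
proof -
  have L1: "\<forall>m\<in>M. m \<noteq> {} \<and> m \<subseteq> {1..n}" and L2: "singletons n \<subseteq> M"
    and L3: "\<forall>c\<in>C. c \<subseteq> M \<and> \<Union>c \<in> M"
    and L4: "\<forall>m\<in>M - singletons n. \<exists>c\<in>C. \<Union>c = m \<and> (\<forall>m'\<in>c. card m' < card m)"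
    using assms(1) unfolding linearization_def is_monomial_def proper_monomials_def by auto
  have finM: "finite M"
  proof -
    have "M \<subseteq> Pow {1..n}" using L1 by auto
    then show ?thesis using finite_subset by blast
  qed
  have TM: "T \<subseteq> M" "\<forall>m\<in>T. m \<subseteq> {1..n}" using assms(2) L1 unfolding proper_monomials_def by auto
  show ?thesis
  proof
    assume "\<exists>y'. in_P M C y' \<and> (\<forall>m\<in>M. y' m \<in> \<int>) \<and>
              (\<forall>m \<in> singletons n \<union> T. y' m = y m)"
    then obtain y' where P: "in_P M C y'" and I: "\<forall>m\<in>M. y' m \<in> \<int>"
      and E: "\<forall>m \<in> singletons n \<union> T. y' m = y m" by blast
    have B: "\<forall>m\<in>M. y' m = 0 \<or> y' m = 1" proof
      fix m assume "m \<in> M"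
      then show "y' m = 0 \<or> y' m = 1" using P I int01[of "y' m"] unfolding in_P_def by simp
    qed
    have P2: "\<forall>c\<in>C. \<forall>m\<in>c. y' (\<Union>c) \<le> y' m"
      and P3: "\<forall>c\<in>C. (\<Sum>m\<in>c. y' m) \<le> y' (\<Union>c) + real (card c) - 1"
      and P1: "\<forall>m\<in>M. 0 \<le> y' m"
      using P unfolding in_P_def by auto
    have key: "m \<in> M \<Longrightarrow> y' m = (if \<forall>i\<in>m. y' {i} = 1 then 1 else 0)" for m
    proof (induction "card m" arbitrary: m rule: less_induct)
      case less
      show ?case
      proof (cases "m \<in> singletons n")
        case True
        then obtain j where "m = {j}" unfolding singletons_def by auto
        moreover have "y' m = 0 \<or> y' m = 1" using B less.prems by blast
        ultimately show ?thesis by auto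
      next
        case False
        have "m \<in> M - singletons n" using False less.prems by blast
        then obtain c where c: "c \<in> C" "\<Union>c = m" "\<forall>m'\<in>c. card m' < card m"
          using L4 by meson
        have cM: "c \<subseteq> M" using L3 c(1) by auto
        have fc: "finite c" using cM finM finite_subset by blast
        have IH: "\<forall>m'\<in>c. y' m' = (if \<forall>i\<in>m'. y' {i} = 1 then 1 else 0)"
          proof
          fix m' assume "m' \<in> c"
          show "y' m' = (if \<forall>i\<in>m'. y' {i} = 1 then 1 else 0)"
          proof (rule less.hyps)
            show "card m' < card m" using c(3) \<open>m' \<in> c\<close> by blast
            show "m' \<in> M" using cM \<open>m' \<in> c\<close> by blast
          qed
        qed
        show ?thesis
        proof (cases "\<forall>i\<in>m. y' {i} = 1")
          case True
          then have "\<forall>m'\<in>c. y' m' = 1" using IH c(2) by auto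
          then have "(\<Sum>m\<in>c. y' m) = real (card c)" by simp
          then have "y' m \<ge> 1" using P3 c by fastforce
          then show ?thesis using True B less.prems by auto
        next
          case False
          then obtain i where "i \<in> m" "y' {i} \<noteq> 1" by auto
          then obtain m' where "m' \<in> c" "i \<in> m'" using c(2) by auto
          then have "y' m' = 0" using IH \<open>y' {i} \<noteq> 1\<close> by auto
          then have "y' m \<le> 0" using P2 c \<open>m' \<in> c\<close> by fastforce
          moreover have "0 \<le> y' m" using P1 less.prems by blast
          ultimately show ?thesis using False by simp
        qed
      qed
    qed
    show "\<forall>m\<in>T. y m = (\<Prod>i\<in>m. y {i})"
    proof
      fix m assume mT: "m \<in> T"
      have mM: "m \<in> M" and ms: "m \<subseteq> {1..n}" using TM mT by auto
      have fm: "finite m" using ms finite_subset by blast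
      have si: "\<forall>i\<in>m. {i} \<in> singletons n" using ms sing_in by blast
      have "\<forall>i\<in>m. y {i} = y' {i}" using si E by auto
      then have "(\<Prod>i\<in>m. y {i}) = (\<Prod>i\<in>m. y' {i})" by simp
      also have "\<dots> = (if \<forall>i\<in>m. y' {i} = 1 then 1 else 0)"
        using prod01[OF fm, of "\<lambda>i. y' {i}"] B si L2 by blast
      also have "\<dots> = y' m" using key mM by simp
      also have "\<dots> = y m" using E mT by auto
      finally show "y m = (\<Prod>i\<in>m. y {i})" by simp
    qed
  next
    assume H: "\<forall>m\<in>T. y m = (\<Prod>i\<in>m. y {i})"
    define S where "S = {i. y {i} = 1}"
    define y' where "y' m = (if m \<subseteq> S then 1 else (0::real))" for m
    have eqp: "y' m = (\<Prod>i\<in>m. y {i})" if "m \<in> M" for m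
    proof -
      have ms: "m \<subseteq> {1..n}" using L1 that by auto
      have fm: "finite m" using ms finite_subset by blast
      have "\<forall>i\<in>m. y {i} \<in> {0,1}" using ms sing_in assms(3) by blast
      then show ?thesis using prod01[OF fm, of "\<lambda>i. y {i}"] unfolding y'_def S_def by auto
    qed
    have "in_P M C y'"
      unfolding in_P_def
    proof (intro conjI ballI)
      fix m assume "m \<in> M" show "0 \<le> y' m" "y' m \<le> 1" unfolding y'_def by auto
    next
      fix c m assume "c \<in> C" "m \<in> c"
      then show "y' (\<Union>c) \<le> y' m" unfolding y'_def by auto
    next
      fix c assume c: "c \<in> C"
      have fc: "finite c" using L3 c finM finite_subset by blast
      show "(\<Sum>m\<in>c. y' m) \<le> y' (\<Union>c) + real (card c) - 1"
      proof (cases "\<Union>c \<subseteq> S")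
        case True
        then have "\<forall>m\<in>c. y' m = 1" unfolding y'_def by auto
        then have "(\<Sum>m\<in>c. y' m) = real (card c)" by simp
        moreover have "y' (\<Union>c) = 1" using True unfolding y'_def by simp
        ultimately show ?thesis by simp
      next
        case False
        then obtain m where m: "m \<in> c" "\<not> m \<subseteq> S" by auto
        have "(\<Sum>m\<in>c. y' m) = y' m + (\<Sum>m\<in>c - {m}. y' m)"
          using fc m(1) by (rule sum.remove)
        also have "\<dots> \<le> 0 + (\<Sum>m\<in>c - {m}. 1)"
          using m(2) by (intro add_mono sum_mono) (auto simp: y'_def)
        also have "\<dots> = real (card c) - 1"
        proof -
          have "c \<noteq> {}" using m(1) by blast
          then have "card c \<ge> 1" using fc by (simp add: Suc_le_eq card_gt_0_iff)
          then show ?thesis using fc m(1) by (simp add: card_Diff_singleton of_nat_diff)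
        qed
        finally have "(\<Sum>m\<in>c. y' m) \<le> real (card c) - 1" .
        moreover have "0 \<le> y' (\<Union>c)" unfolding y'_def by simp
        ultimately show ?thesis by linarith
      qed
    qed
    moreover have "\<forall>m\<in>M. y' m \<in> \<int>" unfolding y'_def by simp
    moreover have "\<forall>m \<in> singletons n \<union> T. y' m = y m"
    proof
      fix m assume m: "m \<in> singletons n \<union> T"
      show "y' m = y m"
      proof (cases "m \<in> T")
        case True
        then have "m \<in> M" using TM by blast
        then have "y' m = (\<Prod>i\<in>m. y {i})" by (rule eqp)
        then show ?thesis using H True by simp
      next
        case False
        then obtain j where "m = {j}" using m unfolding singletons_def by auto
        moreover have "y m \<in> {0,1}" using m assms(3) by blast
        ultimately show ?thesis unfolding y'_def S_def by auto
      qed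
    qed
    ultimately show "\<exists>y'. in_P M C y' \<and> (\<forall>m\<in>M. y' m \<in> \<int>) \<and>
              (\<forall>m \<in> singletons n \<union> T. y' m = y m)" by blast
  qed
qed

end
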